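(* Let $k\ge 0$ be an integer and let $a,b,c\in\mathbb{C}$ be such that no lower parameter below is a nonpositive integer (in particular $b,c\notin\{0,-1,-2,\dots\}$ and $1+a-b,1+a-c\notin\{0,-1,-2,\dots\}$). Define $$Q_k^{(2)}(n;a;b,c)={}_3F_2\!\left[\begin{matrix}-n,\ n+a,\ -k\\ b,\ c\end{matrix}\,\Big|\,1\right]=\sum_{j=0}^{k}\frac{(-n)_j(n+a)_j(-k)_j}{j!\,(b)_j(c)_j},$$ which is a polynomial of degree $2k$ in $n$ (and of degree $k$ in $\lambda=n(n+a)$). Then, as an identity of analytic functions in a neighborhood of $x=0$, $${}_3F_2\!\left[\begin{matrix}\tfrac a2,\ \tfrac12+\tfrac a2,\ 1-k+a-b-c\\ 1+a-b,\ 1+a-c\end{matrix}\,\Big|\,-\frac{4x}{(1-x)^2}\right]=(1-x)^a\sum_{n=0}^\infty\frac{(a)_n(b)_n(c)_n}{n!\,(1+a-b)_n(1+a-c)_n}\,Q_k^{(2)}(n;a;b,c)\,x^n .$$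
   Context: $(c)_n=c(c+1)\cdots(c+n-1)$, $(c)_0=1$, denotes the Pochhammer symbol. ${}_{p}F_{q}\!\left[\begin{smallmatrix}a_1,\dots,a_p\\ b_1,\dots,b_q\end{smallmatrix}\,\big|\,x\right]=\sum_{n\ge0}\frac{(a_1)_n\cdots(a_p)_n}{n!(b_1)_n\cdots(b_q)_n}x^n$ is the generalized hypergeometric series. Equivalently, the right-hand series equals a ${}_{3+2k}F_{2+2k}$ with extra upper parameters $1+\xi_i$ and lower parameters $\xi_i$, where $\xi_1,\dots,\xi_{2k}$ are the negated roots of $Q_k^{(2)}$. *)

theory Defs
  imports "HOL-Analysis.Analysis"
begin

definition hyp_coeff :: "complex list \<Rightarrow> complex list \<Rightarrow> nat \<Rightarrow> complex" where
  "hyp_coeff as bs n =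
     (\<Prod>a\<leftarrow>as. pochhammer a n) / (fact n * (\<Prod>b\<leftarrow>bs. pochhammer b n))"

definition pFq :: "complex list \<Rightarrow> complex list \<Rightarrow> complex \<Rightarrow> complex" where
  "pFq as bs z = (\<Sum>n. hyp_coeff as bs n * z ^ n)"

definition Qk2 :: "nat \<Rightarrow> nat \<Rightarrow> complex \<Rightarrow> complex \<Rightarrow> complex \<Rightarrow> complex" where
  "Qk2 k n a b c =
     (\<Sum>j=0..k. hyp_coeff [- of_nat n, of_nat n + a, - of_nat k] [b, c] j)"

end

theory Submission
  imports Defs "HOL-Complex_Analysis.Complex_Analysis" "HOL-Real_Asymp.Real_Asymp"
begin


lemma wz_alg:
  fixes B0 B1 r m al be ga :: complex
  assumes "B1 * (r + 1) = B0 * m" "r + 1 \<noteq> 0"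
  shows "- (B0 + B1) * (ga + m + r) * (al + be - ga - r) - (ga - al + (m + r)) * (ga - be + (m + r)) * B0
       = - B0 * (al + m) * (be + m) - B1 * (ga + m - 1) * (al + be - ga - r)"
proof -
  have "(r + 1) * ((- (B0 + B1) * (ga + m + r) * (al + be - ga - r) - (ga - al + (m + r)) * (ga - be + (m + r)) * B0)
       - (- B0 * (al + m) * (be + m) - B1 * (ga + m - 1) * (al + be - ga - r))) = 0"
    using assms(1) by algebra
  then show ?thesis using assms(2) by simp
qed



definition sphi :: "complex \<Rightarrow> complex \<Rightarrow> complex \<Rightarrow> nat \<Rightarrow> nat \<Rightarrow> complex" where
  "sphi al be ga n m = (-1)^m * of_nat (n choose m) * pochhammer al m * pochhammer be m
     * pochhammer (ga + of_nat m) (n - m) * pochhammer (1 + al + be - ga - of_nat n + of_nat m) (n - m)"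

definition sgam :: "complex \<Rightarrow> complex \<Rightarrow> complex \<Rightarrow> nat \<Rightarrow> nat \<Rightarrow> complex" where
  "sgam al be ga n m = (if m = 0 then 0 else (-1)^m * of_nat (n choose (m - 1)) * pochhammer al m * pochhammer be m
     * pochhammer (ga + of_nat m - 1) (Suc n - m) * pochhammer (al + be - ga - of_nat n + of_nat m) (Suc n - m))"

lemma poch_rec_eq: "w = z + 1 \<Longrightarrow> pochhammer z (Suc r) = z * pochhammer w r"
  by (simp add: pochhammer_rec)

lemma poch_rec_eq2: "w = z + 1 \<Longrightarrow> c = z \<Longrightarrow> pochhammer z (Suc r) = c * pochhammer w r"
  by (simp add: pochhammer_rec)

lemma eq_by_factor: "(x::complex) - y = k * (l - r) \<Longrightarrow> l = r \<Longrightarrow> x = y"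
  by simp

lemma poch_cong: "z = w \<Longrightarrow> pochhammer z r = pochhammer w r"
  by simp

lemma choose_rel: "(n choose k) * (n - k) = (n choose Suc k) * Suc k"
  using binomial_absorb_comp[of n k] binomial_absorption[of k n] by (simp add: mult.commute)

lemma wz_step:
  assumes "m \<le> Suc n"
  shows "- sphi al be ga (Suc n) m - (ga - al + of_nat n) * (ga - be + of_nat n) * sphi al be ga n m
       = sgam al be ga n (Suc m) - sgam al be ga n m"
proof -
  consider "m = Suc n" | "m = 0" "m \<le> n" | m' where "m = Suc m'" "m \<le> n"
    using assms by (cases m) (auto simp: le_Suc_eq)
  then show ?thesis
  proof cases
    case 1
    then show ?thesis by (simp add: sphi_def sgam_def)
  next
    case 2
    define X2 where "X2 = pochhammer (1 + al + be - ga - of_nat n) n"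
    have t1: "sphi al be ga (Suc n) 0 = (pochhammer ga n * (ga + of_nat n)) * ((al + be - ga - of_nat n) * X2)"
    proof -
      have e2: "pochhammer (1 + al + be - ga - of_nat (Suc n)) (Suc n) = (al + be - ga - of_nat n) * X2"
        unfolding X2_def by (rule poch_rec_eq2) (simp_all add: algebra_simps)
      show ?thesis unfolding sphi_def using e2 by (simp add: pochhammer_Suc del: of_nat_Suc)
    qed
    have t2: "sphi al be ga n 0 = pochhammer ga n * X2" by (simp add: sphi_def X2_def)
    have t3: "sgam al be ga n (Suc 0) = - (al * be * pochhammer ga n * X2)"
    proof -
      have e4: "pochhammer (al + be - ga - of_nat n + 1) n = X2"
        unfolding X2_def by (rule poch_cong) simp
      show ?thesis unfolding sgam_def using e4 by simp
    qed
    have t4: "sgam al be ga n 0 = 0" by (simp add: sgam_def)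
    have alg: "- ((ga + of_nat n) * (al + be - ga - of_nat n)) - (ga - al + of_nat n) * (ga - be + of_nat n) = - al * be"
      by (simp add: algebra_simps)
    show ?thesis unfolding \<open>m = 0\<close> t1 t2 t3 t4
      by (rule eq_by_factor[OF _ alg, where k = "pochhammer ga n * X2"]) (simp add: algebra_simps)
  next
    case 3
    obtain r where nr: "n = m + r" using 3 le_Suc_ex by blast
    define P where "P = pochhammer al m * pochhammer be m"
    define X1 where "X1 = pochhammer (ga + of_nat m) r"
    define X2 where "X2 = pochhammer (1 + al + be - ga - of_nat n + of_nat m) r"
    define B0 where "B0 = (of_nat (n choose m) :: complex)"
    define B1 where "B1 = (of_nat (n choose m') :: complex)"
    have q1: "Suc n - m = Suc r" "n - m = r" "Suc n - Suc m = r" using nr by auto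
    have ch1: "Suc n choose m = (n choose m) + (n choose m')" using 3 by simp
    have s1: "sphi al be ga (Suc n) m = (-1)^m * (B0 + B1) * P * (X1 * (ga + of_nat m + of_nat r)) * ((al + be - ga - of_nat r) * X2)"
    proof -
      have a: "pochhammer (ga + of_nat m) (Suc r) = X1 * (ga + of_nat m + of_nat r)"
        by (simp add: X1_def pochhammer_Suc)
      have b: "pochhammer (1 + al + be - ga - of_nat (Suc n) + of_nat m) (Suc r) = (al + be - ga - of_nat r) * X2"
        unfolding X2_def by (rule poch_rec_eq2) (simp_all add: nr algebra_simps)
      show ?thesis unfolding sphi_def q1 a b ch1 B0_def B1_def P_def by (simp add: algebra_simps)
    qed
    have s2: "sphi al be ga n m = (-1)^m * B0 * P * X1 * X2"
      unfolding sphi_def q1 B0_def P_def X1_def X2_def by (simp add: algebra_simps)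
    have s3: "sgam al be ga n (Suc m) = - ((-1)^m * B0 * P * (al + of_nat m) * (be + of_nat m) * X1 * X2)"
    proof -
      have a: "pochhammer (ga + of_nat (Suc m) - 1) r = X1" unfolding X1_def by (rule poch_cong) simp
      have b: "pochhammer (al + be - ga - of_nat n + of_nat (Suc m)) r = X2" unfolding X2_def by (rule poch_cong) simp
      show ?thesis unfolding sgam_def q1 a b B0_def P_def
        by (simp add: pochhammer_Suc algebra_simps del: of_nat_Suc)
    qed
    have s4: "sgam al be ga n m = (-1)^m * B1 * P * ((ga + of_nat m - 1) * X1) * ((al + be - ga - of_nat r) * X2)"
    proof -
      have a: "pochhammer (ga + of_nat m - 1) (Suc r) = (ga + of_nat m - 1) * X1"
        unfolding X1_def by (rule poch_rec_eq) simp
      have b: "pochhammer (al + be - ga - of_nat n + of_nat m) (Suc r) = (al + be - ga - of_nat r) * X2"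
        unfolding X2_def by (rule poch_rec_eq2) (simp_all add: nr algebra_simps)
      show ?thesis unfolding sgam_def q1 a b B1_def P_def using 3 by (simp add: algebra_simps)
    qed
    have rel: "B1 * (of_nat r + 1) = B0 * of_nat m"
    proof -
      have "(n choose m') * (n - m') = (n choose m) * m" using choose_rel[of n m'] 3 by simp
      moreover have "n - m' = r + 1" using nr 3 by simp
      ultimately have "(n choose m') * (r + 1) = (n choose m) * m" by simp
      then have "of_nat ((n choose m') * (r + 1)) = (of_nat ((n choose m) * m) :: complex)" by simp
      then show ?thesis unfolding B0_def B1_def by (simp add: algebra_simps)
    qed
    have nz: "(of_nat r :: complex) + 1 \<noteq> 0"
      by (metis of_nat_Suc of_nat_eq_0_iff add.commute nat.distinct(1))
    have W: "- (B0 + B1) * (ga + of_nat m + of_nat r) * (al + be - ga - of_nat r) - (ga - al + (of_nat m + of_nat r)) * (ga - be + (of_nat m + of_nat r)) * B0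
       = - B0 * (al + of_nat m) * (be + of_nat m) - B1 * (ga + of_nat m - 1) * (al + be - ga - of_nat r)"
      by (rule wz_alg[OF rel nz])
    have nn: "(of_nat n :: complex) = of_nat m + of_nat r" using nr by simp
    show ?thesis unfolding s1 s2 s3 s4 nn
      by (rule eq_by_factor[OF _ W, where k = "(-1)^m * P * X1 * X2"]) (simp add: algebra_simps)
  qed
qed



lemma saal:
  "(\<Sum>m\<le>n. sphi al be ga n m) = (-1)^n * pochhammer (ga - al) n * pochhammer (ga - be) n"
proof (induction n)
  case 0
  then show ?case by (simp add: sphi_def)
next
  case (Suc n)
  have "(\<Sum>m<Suc (Suc n). - sphi al be ga (Suc n) m - (ga - al + of_nat n) * (ga - be + of_nat n) * sphi al be ga n m)
      = (\<Sum>m<Suc (Suc n). sgam al be ga n (Suc m) - sgam al be ga n m)"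
    by (rule sum.cong) (auto intro!: wz_step)
  also have "\<dots> = sgam al be ga n (Suc (Suc n)) - sgam al be ga n 0"
    by (rule sum_lessThan_telescope)
  also have "\<dots> = 0" by (simp add: sgam_def)
  finally have E: "(\<Sum>m<Suc (Suc n). - sphi al be ga (Suc n) m - (ga - al + of_nat n) * (ga - be + of_nat n) * sphi al be ga n m) = 0" .
  have z: "sphi al be ga n (Suc n) = 0" by (simp add: sphi_def)
  have "(\<Sum>m<Suc (Suc n). sphi al be ga n m) = (\<Sum>m\<le>n. sphi al be ga n m)"
    using z by (simp add: lessThan_Suc_atMost[symmetric])
  moreover have "(\<Sum>m<Suc (Suc n). - sphi al be ga (Suc n) m - (ga - al + of_nat n) * (ga - be + of_nat n) * sphi al be ga n m)
     = - (\<Sum>m<Suc (Suc n). sphi al be ga (Suc n) m) - (ga - al + of_nat n) * (ga - be + of_nat n) * (\<Sum>m<Suc (Suc n). sphi al be ga n m)"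
    by (simp only: sum_subtractf sum_negf sum_distrib_left)
  ultimately have "(\<Sum>m\<le>Suc n. sphi al be ga (Suc n) m) = - ((ga - al + of_nat n) * (ga - be + of_nat n)) * (\<Sum>m\<le>n. sphi al be ga n m)"
    using E by (simp add: lessThan_Suc_atMost[symmetric] del: sum.lessThan_Suc) (simp add: algebra_simps eq_neg_iff_add_eq_0)
  also have "\<dots> = (-1)^Suc n * pochhammer (ga - al) (Suc n) * pochhammer (ga - be) (Suc n)"
    unfolding Suc.IH by (simp add: pochhammer_Suc algebra_simps)
  finally show ?case .
qed



lemma S0:
  fixes A b c :: complex
  shows "(\<Sum>m\<le>N. (-1)^m * of_nat (N choose m) * pochhammer (A + of_nat N) m * pochhammer (1 + A - b - c) m
     * pochhammer (1 + A - b + of_nat m) (N - m) * pochhammer (1 + A - c + of_nat m) (N - m))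
   = pochhammer b N * pochhammer c N"
proof -
  have "(\<Sum>m\<le>N. (-1)^m * of_nat (N choose m) * pochhammer (A + of_nat N) m * pochhammer (1 + A - b - c) m
     * pochhammer (1 + A - b + of_nat m) (N - m) * pochhammer (1 + A - c + of_nat m) (N - m))
    = (\<Sum>m\<le>N. sphi (A + of_nat N) (1 + A - b - c) (1 + A - b) N m)"
  proof (rule sum.cong)
    fix m assume "m \<in> {..N}"
    have "pochhammer (1 + (A + of_nat N) + (1 + A - b - c) - (1 + A - b) - of_nat N + of_nat m) (N - m)
        = pochhammer (1 + A - c + of_nat m) (N - m)" by (rule poch_cong) (simp add: algebra_simps)
    then show "(-1)^m * of_nat (N choose m) * pochhammer (A + of_nat N) m * pochhammer (1 + A - b - c) m
     * pochhammer (1 + A - b + of_nat m) (N - m) * pochhammer (1 + A - c + of_nat m) (N - m)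
      = sphi (A + of_nat N) (1 + A - b - c) (1 + A - b) N m"
      unfolding sphi_def by (simp add: algebra_simps)
  qed simp
  also have "\<dots> = (-1)^N * pochhammer (1 + A - b - (A + of_nat N)) N * pochhammer (1 + A - b - (1 + A - b - c)) N"
    by (rule saal)
  also have "pochhammer (1 + A - b - (A + of_nat N)) N = (-1)^N * pochhammer b N"
  proof -
    have "pochhammer (1 + A - b - (A + of_nat N)) N = pochhammer (- b - of_nat N + 1) N"
      by (rule poch_cong) (simp add: algebra_simps)
    also have "\<dots> = (-1)^N * pochhammer b N" using pochhammer_minus'[of "-b" N] by simp
    finally show ?thesis .
  qed
  also have "pochhammer (1 + A - b - (1 + A - b - c)) N = pochhammer c N"
    by (rule poch_cong) (simp add: algebra_simps)
  finally show ?thesis by (simp add: power_mult_distrib[symmetric])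
qed

lemma pcong2: "x = y \<Longrightarrow> n = m \<Longrightarrow> pochhammer x n = pochhammer y m" by simp

lemma PI:
  fixes a b c :: complex
  shows "(\<Sum>i\<le>n. (-1)^i * of_nat (n choose i) * pochhammer a (n + i) * pochhammer (1 - of_nat k + a - b - c) i
            * pochhammer (1 + a - b + of_nat i) (n - i) * pochhammer (1 + a - c + of_nat i) (n - i))
       = (\<Sum>j\<le>n. (-1)^j * of_nat (n choose j) * pochhammer a (n + j) * pochhammer (- of_nat k) j
            * pochhammer (b + of_nat j) (n - j) * pochhammer (c + of_nat j) (n - j))"
proof -
  define e where "e = 1 + a - b - c"
  define T where "T = (\<lambda>i j. (-1)^i * of_nat (n choose i) * of_nat (i choose j) * pochhammer a (n + i)
      * pochhammer (- of_nat k) j * pochhammer e (i - j)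
      * pochhammer (1 + a - b + of_nat i) (n - i) * pochhammer (1 + a - c + of_nat i) (n - i))"
  have V: "pochhammer (1 - of_nat k + a - b - c) i = (\<Sum>j\<le>i. of_nat (i choose j) * pochhammer (- of_nat k) j * pochhammer e (i - j))" for i
  proof -
    have "pochhammer (1 - of_nat k + a - b - c) i = pochhammer (- of_nat k + e) i"
      by (rule poch_cong) (simp add: e_def algebra_simps)
    then show ?thesis using pochhammer_binomial_sum[of "- of_nat k" e i] by simp
  qed
  have "(\<Sum>i\<le>n. (-1)^i * of_nat (n choose i) * pochhammer a (n + i) * pochhammer (1 - of_nat k + a - b - c) i
            * pochhammer (1 + a - b + of_nat i) (n - i) * pochhammer (1 + a - c + of_nat i) (n - i))
      = (\<Sum>i\<le>n. \<Sum>j\<le>i. T i j)"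
    unfolding V T_def by (simp add: sum_distrib_left sum_distrib_right algebra_simps)
  also have "\<dots> = (\<Sum>i\<in>{..n}. \<Sum>j\<in>{j. j \<in> {..n} \<and> j \<le> i}. T i j)"
    by (rule sum.cong) (auto intro!: sum.cong)
  also have "\<dots> = (\<Sum>j\<in>{..n}. \<Sum>i\<in>{i. i \<in> {..n} \<and> j \<le> i}. T i j)"
    by (rule sum.swap_restrict) auto
  also have "\<dots> = (\<Sum>j\<le>n. \<Sum>m\<le>n - j. T (j + m) j)"
  proof (rule sum.cong)
    fix j assume j: "j \<in> {..n}"
    have "{i. i \<in> {..n} \<and> j \<le> i} = {j..n}" by auto
    then show "(\<Sum>i\<in>{i. i \<in> {..n} \<and> j \<le> i}. T i j) = (\<Sum>m\<le>n - j. T (j + m) j)"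
      using j by (simp add: sum.atLeastAtMost_shift_0 atLeast0AtMost comp_def)
  qed simp
  also have "\<dots> = (\<Sum>j\<le>n. (-1)^j * of_nat (n choose j) * pochhammer a (n + j) * pochhammer (- of_nat k) j
            * pochhammer (b + of_nat j) (n - j) * pochhammer (c + of_nat j) (n - j))"
  proof (rule sum.cong)
    fix j assume j: "j \<in> {..n}"
    define A where "A = a + 2 * of_nat j"
    define K where "K = (-1)^j * of_nat (n choose j) * pochhammer a (n + j) * pochhammer (- of_nat k) j"
    have "T (j + m) j = K * ((-1)^m * of_nat ((n - j) choose m) * pochhammer (A + of_nat (n - j)) m
        * pochhammer (1 + A - (b + of_nat j) - (c + of_nat j)) m
        * pochhammer (1 + A - (b + of_nat j) + of_nat m) ((n - j) - m) * pochhammer (1 + A - (c + of_nat j) + of_nat m) ((n - j) - m))"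
      if m: "m \<le> n - j" for m
    proof -
      have c1: "of_nat (n choose (j + m)) * of_nat ((j + m) choose j) = (of_nat (n choose j) * of_nat ((n - j) choose m) :: complex)"
        using choose_mult[of j "j + m" n] m j by (simp flip: of_nat_mult)
      have p1: "pochhammer a (n + (j + m)) = pochhammer a (n + j) * pochhammer (A + of_nat (n - j)) m"
      proof -
        have "pochhammer a (n + (j + m)) = pochhammer a ((n + j) + m)" by (simp add: add.assoc)
        also have "\<dots> = pochhammer a (n + j) * pochhammer (a + of_nat (n + j)) m" by (rule pochhammer_product')
        also have "pochhammer (a + of_nat (n + j)) m = pochhammer (A + of_nat (n - j)) m"
          using j by (intro poch_cong) (simp add: A_def of_nat_diff algebra_simps)
        finally show ?thesis .
      qed
      have p2: "pochhammer e (j + m - j) = pochhammer (1 + A - (b + of_nat j) - (c + of_nat j)) m"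
        by (rule pcong2) (simp_all add: e_def A_def algebra_simps)
      have p3: "pochhammer (1 + a - b + of_nat (j + m)) (n - (j + m)) = pochhammer (1 + A - (b + of_nat j) + of_nat m) ((n - j) - m)"
        by (rule pcong2) (simp_all add: A_def algebra_simps)
      have p4: "pochhammer (1 + a - c + of_nat (j + m)) (n - (j + m)) = pochhammer (1 + A - (c + of_nat j) + of_nat m) ((n - j) - m)"
        by (rule pcong2) (simp_all add: A_def algebra_simps)
      have "T (j + m) j = (-1)^j * (-1)^m * (of_nat (n choose (j + m)) * of_nat ((j + m) choose j)) * pochhammer a (n + (j + m))
         * pochhammer (- of_nat k) j * pochhammer e (j + m - j)
         * pochhammer (1 + a - b + of_nat (j + m)) (n - (j + m)) * pochhammer (1 + a - c + of_nat (j + m)) (n - (j + m))"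
        unfolding T_def by (simp add: power_add algebra_simps)
      also have "\<dots> = K * ((-1)^m * of_nat ((n - j) choose m) * pochhammer (A + of_nat (n - j)) m
        * pochhammer (1 + A - (b + of_nat j) - (c + of_nat j)) m
        * pochhammer (1 + A - (b + of_nat j) + of_nat m) ((n - j) - m) * pochhammer (1 + A - (c + of_nat j) + of_nat m) ((n - j) - m))"
        unfolding c1 p1 p2 p3 p4 K_def by (simp add: algebra_simps)
      finally show ?thesis .
    qed
    then have "(\<Sum>m\<le>n - j. T (j + m) j) = K * (\<Sum>m\<le>n - j. (-1)^m * of_nat ((n - j) choose m) * pochhammer (A + of_nat (n - j)) m
        * pochhammer (1 + A - (b + of_nat j) - (c + of_nat j)) m
        * pochhammer (1 + A - (b + of_nat j) + of_nat m) ((n - j) - m) * pochhammer (1 + A - (c + of_nat j) + of_nat m) ((n - j) - m))"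
      by (simp add: sum_distrib_left)
    also have "\<dots> = K * (pochhammer (b + of_nat j) (n - j) * pochhammer (c + of_nat j) (n - j))"
      by (simp only: S0)
    finally show "(\<Sum>m\<le>n - j. T (j + m) j) = (-1)^j * of_nat (n choose j) * pochhammer a (n + j) * pochhammer (- of_nat k) j
            * pochhammer (b + of_nat j) (n - j) * pochhammer (c + of_nat j) (n - j)"
      by (simp add: K_def algebra_simps)
  qed simp
  finally show ?thesis .
qed



lemma poch_nz:
  assumes "(x::complex) \<notin> \<int>\<^sub>\<le>\<^sub>0"
  shows "pochhammer x n \<noteq> 0"
proof
  assume "pochhammer x n = 0"
  then obtain j where "x = - of_nat j" by (auto simp: pochhammer_eq_0_iff)
  with assms show False by auto
qed

lemma nonpos_shift: "(x::complex) \<notin> \<int>\<^sub>\<le>\<^sub>0 \<Longrightarrow> x + of_nat j \<notin> \<int>\<^sub>\<le>\<^sub>0"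
proof
  assume "x \<notin> \<int>\<^sub>\<le>\<^sub>0" "x + of_nat j \<in> \<int>\<^sub>\<le>\<^sub>0"
  then obtain m where "x + of_nat j = - of_nat m" by (auto elim!: nonpos_Ints_cases')
  then have "x = - of_nat m - of_nat j" by (simp add: eq_diff_eq)
  then have "x = - of_nat (m + j)" by simp
  with \<open>x \<notin> \<int>\<^sub>\<le>\<^sub>0\<close> show False by (metis minus_of_nat_in_nonpos_Ints)
qed

lemma termA:
  fixes a b c :: complex
  assumes i: "i \<le> n" and D: "1 + a - b \<notin> \<int>\<^sub>\<le>\<^sub>0" and E: "1 + a - c \<notin> \<int>\<^sub>\<le>\<^sub>0"
  shows "hyp_coeff [a/2, 1/2 + a/2, 1 - of_nat k + a - b - c] [1 + a - b, 1 + a - c] i * (-4)^i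
           * (pochhammer (a + 2 * of_nat i) (n - i) / fact (n - i))
       = (-1)^i * of_nat (n choose i) * pochhammer a (n + i) * pochhammer (1 - of_nat k + a - b - c) i
            * pochhammer (1 + a - b + of_nat i) (n - i) * pochhammer (1 + a - c + of_nat i) (n - i)
           / (fact n * pochhammer (1 + a - b) n * pochhammer (1 + a - c) n)"
proof -
  define e where "e = 1 - of_nat k + a - b - c"
  define DD where "DD = 1 + a - b"
  define EE where "EE = 1 + a - c"
  have f4: "((2::complex)^i)^2 = 4^i" by (simp add: power2_eq_square power_mult_distrib[symmetric])
  have d: "pochhammer (a/2) i * pochhammer (1/2 + a/2) i * 4^i = pochhammer a (2*i)"
    using pochhammer_double[of "a/2" i] by (simp add: power_mult add.commute mult.commute f4)
  have p: "pochhammer a (2*i) * pochhammer (a + 2 * of_nat i) (n - i) = pochhammer a (n + i)"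
    using pochhammer_product'[of a "2*i" "n - i"] i by (simp add: add.commute)
  have pD: "pochhammer DD n = pochhammer DD i * pochhammer (1 + a - b + of_nat i) (n - i)"
    using pochhammer_product[OF i, of DD] by (simp add: DD_def)
  have pE: "pochhammer EE n = pochhammer EE i * pochhammer (1 + a - c + of_nat i) (n - i)"
    using pochhammer_product[OF i, of EE] by (simp add: EE_def)
  have bf: "(fact n :: complex) = of_nat (n choose i) * fact i * fact (n - i)"
  proof -
    have "(of_nat (fact i * fact (n - i) * (n choose i)) :: complex) = of_nat (fact n)"
      using binomial_fact_lemma[OF i] by (simp only:)
    then show ?thesis by (simp add: mult_ac)
  qed
  have nzD: "pochhammer DD n \<noteq> 0" "pochhammer EE n \<noteq> 0"
    using poch_nz D E by (auto simp: DD_def EE_def)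
  then have nz: "pochhammer DD i \<noteq> 0" "pochhammer (1 + a - b + of_nat i) (n - i) \<noteq> 0"
    "pochhammer EE i \<noteq> 0" "pochhammer (1 + a - c + of_nat i) (n - i) \<noteq> 0"
    using pD pE by auto
  have "hyp_coeff [a/2, 1/2 + a/2, e] [DD, EE] i * (-4)^i * (pochhammer (a + 2 * of_nat i) (n - i) / fact (n - i))
      = (-1)^i * (pochhammer (a/2) i * pochhammer (1/2 + a/2) i * 4^i) * pochhammer (a + 2 * of_nat i) (n - i)
          * pochhammer e i / (fact i * fact (n - i) * pochhammer DD i * pochhammer EE i)"
  proof -
    have m4: "(-4::complex)^i = (-1)^i * 4^i" by (simp add: power_mult_distrib[symmetric])
    show ?thesis unfolding hyp_coeff_def m4 by (simp add: mult_ac)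
  qed
  also have "\<dots> = (-1)^i * pochhammer a (n + i) * pochhammer e i / (fact i * fact (n - i) * pochhammer DD i * pochhammer EE i)"
    unfolding d p[symmetric] by (simp add: mult.assoc)
  also have "\<dots> = (-1)^i * of_nat (n choose i) * pochhammer a (n + i) * pochhammer e i
            * pochhammer (1 + a - b + of_nat i) (n - i) * pochhammer (1 + a - c + of_nat i) (n - i)
           / (fact n * pochhammer DD n * pochhammer EE n)"
    unfolding bf pD pE using nz i by (simp add: field_simps)
  finally show ?thesis by (simp add: e_def DD_def EE_def)
qed



lemma poch_negnat: "pochhammer (- of_nat n :: complex) j = (-1)^j * of_nat (n choose j) * fact j"
proof -
  have "(-1)^j * (of_nat n gchoose j) * fact j = ((-1)^j * (-1)^j) * pochhammer (- of_nat n :: complex) j"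
    by (simp add: gbinomial_pochhammer)
  also have "(-1)^j * (-1)^j = (1::complex)" by (simp add: power_mult_distrib[symmetric])
  finally show ?thesis by (simp add: binomial_gbinomial)
qed

lemma termB:
  fixes a b c :: complex
  assumes b: "b \<notin> \<int>\<^sub>\<le>\<^sub>0" and c: "c \<notin> \<int>\<^sub>\<le>\<^sub>0"
    and D: "1 + a - b \<notin> \<int>\<^sub>\<le>\<^sub>0" and E: "1 + a - c \<notin> \<int>\<^sub>\<le>\<^sub>0"
  shows "hyp_coeff [a, b, c] [1 + a - b, 1 + a - c] n * Qk2 k n a b c
    = (\<Sum>j\<le>n. (-1)^j * of_nat (n choose j) * pochhammer a (n + j) * pochhammer (- of_nat k) j
            * pochhammer (b + of_nat j) (n - j) * pochhammer (c + of_nat j) (n - j))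
      / (fact n * pochhammer (1 + a - b) n * pochhammer (1 + a - c) n)"
proof -
  define u where "u = (\<lambda>j. (-1)^j * of_nat (n choose j) * pochhammer a (n + j) * pochhammer (- of_nat k) j
            * pochhammer (b + of_nat j) (n - j) * pochhammer (c + of_nat j) (n - j))"
  define f where "f = (\<lambda>j. pochhammer a n * pochhammer b n * pochhammer c n
       * hyp_coeff [- of_nat n, of_nat n + a, - of_nat k] [b, c] j)"
  define S where "S = {0..k} \<inter> {..n}"
  have f0: "f j = 0" if "j > n" for j
    using that by (simp add: f_def hyp_coeff_def pochhammer_of_nat_eq_0_lemma)
  have u0: "u j = 0" if "j > k" for j
    using that by (simp add: u_def pochhammer_of_nat_eq_0_lemma)
  have fu: "f j = u j" if j: "j \<le> n" for j
  proof -
    have pb: "pochhammer b n = pochhammer b j * pochhammer (b + of_nat j) (n - j)"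
      by (rule pochhammer_product[OF j])
    have pc: "pochhammer c n = pochhammer c j * pochhammer (c + of_nat j) (n - j)"
      by (rule pochhammer_product[OF j])
    have pa: "pochhammer a (n + j) = pochhammer a n * pochhammer (of_nat n + a) j"
    proof -
      have "pochhammer a (n + j) = pochhammer a n * pochhammer (a + of_nat n) j" by (rule pochhammer_product')
      also have "pochhammer (a + of_nat n) j = pochhammer (of_nat n + a) j" by (rule poch_cong) (rule add.commute)
      finally show ?thesis .
    qed
    have nz: "pochhammer b j \<noteq> 0" "pochhammer c j \<noteq> 0"
      using poch_nz b c by auto
    show ?thesis
      unfolding f_def u_def hyp_coeff_def pb pc pa using nz
      by (simp add: field_simps poch_negnat[of n j])
  qed
  have "(\<Sum>j=0..k. f j) = (\<Sum>j\<in>S. f j)"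
    by (rule sum.mono_neutral_right) (auto simp: S_def f0)
  also have "\<dots> = (\<Sum>j\<in>S. u j)"
    by (rule sum.cong) (auto simp: S_def fu)
  also have "\<dots> = (\<Sum>j\<le>n. u j)"
    by (rule sum.mono_neutral_left) (auto simp: S_def u0)
  finally have main: "(\<Sum>j=0..k. f j) = (\<Sum>j\<le>n. u j)" .
  have nzD: "pochhammer (1 + a - b) n \<noteq> 0" "pochhammer (1 + a - c) n \<noteq> 0"
    using poch_nz D E by auto
  have "hyp_coeff [a, b, c] [1 + a - b, 1 + a - c] n * Qk2 k n a b c
      = (\<Sum>j=0..k. f j) / (fact n * pochhammer (1 + a - b) n * pochhammer (1 + a - c) n)"
    unfolding Qk2_def f_def using nzD
    by (simp add: hyp_coeff_def sum_distrib_left sum_divide_distrib mult_ac)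
  then show ?thesis unfolding main u_def .
qed



lemma coeff_id:
  fixes a b c :: complex
  assumes b: "b \<notin> \<int>\<^sub>\<le>\<^sub>0" and c: "c \<notin> \<int>\<^sub>\<le>\<^sub>0"
    and D: "1 + a - b \<notin> \<int>\<^sub>\<le>\<^sub>0" and E: "1 + a - c \<notin> \<int>\<^sub>\<le>\<^sub>0"
  shows "(\<Sum>i\<le>n. hyp_coeff [a/2, 1/2 + a/2, 1 - of_nat k + a - b - c] [1 + a - b, 1 + a - c] i * (-4)^i
           * (pochhammer (a + 2 * of_nat i) (n - i) / fact (n - i)))
       = hyp_coeff [a, b, c] [1 + a - b, 1 + a - c] n * Qk2 k n a b c"
proof -
  have "(\<Sum>i\<le>n. hyp_coeff [a/2, 1/2 + a/2, 1 - of_nat k + a - b - c] [1 + a - b, 1 + a - c] i * (-4)^i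
           * (pochhammer (a + 2 * of_nat i) (n - i) / fact (n - i)))
     = (\<Sum>i\<le>n. (-1)^i * of_nat (n choose i) * pochhammer a (n + i) * pochhammer (1 - of_nat k + a - b - c) i
            * pochhammer (1 + a - b + of_nat i) (n - i) * pochhammer (1 + a - c + of_nat i) (n - i)
           / (fact n * pochhammer (1 + a - b) n * pochhammer (1 + a - c) n))"
    by (rule sum.cong[OF refl], rule termA) (simp_all add: D E)
  also have "\<dots> = (\<Sum>i\<le>n. (-1)^i * of_nat (n choose i) * pochhammer a (n + i) * pochhammer (1 - of_nat k + a - b - c) i
            * pochhammer (1 + a - b + of_nat i) (n - i) * pochhammer (1 + a - c + of_nat i) (n - i))
           / (fact n * pochhammer (1 + a - b) n * pochhammer (1 + a - c) n)"
    by (rule sum_divide_distrib[symmetric])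
  also have "\<dots> = hyp_coeff [a, b, c] [1 + a - b, 1 + a - c] n * Qk2 k n a b c"
    unfolding PI termB[OF b c D E] ..
  finally show ?thesis .
qed

definition Pc :: "complex \<Rightarrow> complex fps" where
  "Pc c = Abs_fps (\<lambda>n. (-1)^n * (c gchoose n))"

lemma Pc_nth: "fps_nth (Pc c) n = pochhammer (- c) n / fact n"
proof -
  have "fps_nth (Pc c) n = ((-1)^n * (-1)^n) * pochhammer (- c) n / fact n"
    by (simp add: Pc_def gbinomial_pochhammer)
  also have "(-1)^n * (-1)^n = (1::complex)" by (simp add: power_mult_distrib[symmetric])
  finally show ?thesis by simp
qed

lemma Pc_mult: "Pc c * Pc d = Pc (c + d)"
proof (rule fps_ext)
  fix n
  have "fps_nth (Pc c * Pc d) n = (\<Sum>i=0..n. (-1)^i * (c gchoose i) * ((-1)^(n-i) * (d gchoose (n - i))))"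
    by (simp add: fps_mult_nth Pc_def)
  also have "\<dots> = (\<Sum>i=0..n. (-1)^n * ((c gchoose i) * (d gchoose (n - i))))"
    by (rule sum.cong) (auto simp: power_add[symmetric] mult_ac)
  also have "\<dots> = (-1)^n * fps_nth (fps_binomial c * fps_binomial d) n"
    by (simp add: fps_mult_nth sum_distrib_left)
  also have "\<dots> = fps_nth (Pc (c + d)) n"
    by (simp add: fps_binomial_add_mult[symmetric] Pc_def)
  finally show "fps_nth (Pc c * Pc d) n = fps_nth (Pc (c + d)) n" .
qed

lemma Pc_0: "Pc 0 = 1"
  by (rule fps_ext) (simp add: Pc_def gbinomial_0_left)

lemma Pc_power: "Pc c ^ i = Pc (of_nat i * c)"
proof (induction i)
  case 0
  then show ?case by (simp add: Pc_0)
next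
  case (Suc i)
  have "Pc c ^ Suc i = Pc c * Pc (of_nat i * c)" by (simp add: Suc.IH)
  also have "\<dots> = Pc (c + of_nat i * c)" by (rule Pc_mult)
  also have "c + of_nat i * c = of_nat (Suc i) * c" by (simp add: algebra_simps)
  finally show ?case .
qed

lemma Pc_radius: "fps_conv_radius (Pc c) \<ge> 1"
proof -
  have "fps_conv_radius (Pc c) = fps_conv_radius (fps_binomial c)"
    unfolding fps_conv_radius_def
    by (intro conv_radius_cong always_eventually allI) (simp add: Pc_def norm_mult norm_power)
  then show ?thesis by (simp add: fps_conv_radius_binomial)
qed

lemma Pc_eval:
  assumes "norm x < 1"
  shows "eval_fps (Pc c) x = (1 - x) powr c"
proof -
  have "norm (-x) < 1" using assms by simp
  from gen_binomial_complex[OF this, of c]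
  have "(\<lambda>n. (c gchoose n) * (- x)^n) sums (1 + - x) powr c" .
  moreover have "(\<lambda>n. (c gchoose n) * (- x)^n) = (\<lambda>n. fps_nth (Pc c) n * x^n)"
    by (rule ext) (simp add: Pc_def power_minus')
  ultimately show ?thesis by (simp add: eval_fps_def sums_iff)
qed

lemma Pc_expansion: "(\<lambda>x. (1 - x) powr c) has_fps_expansion Pc c"
proof -
  have *: "eventually (\<lambda>z::complex. z \<in> ball 0 1) (nhds 0)"
    by (intro eventually_nhds_in_open) auto
  have "fps_conv_radius (Pc c) > 0"
  proof -
    have "(0::ereal) < 1" by simp
    also have "1 \<le> fps_conv_radius (Pc c)" by (rule Pc_radius)
    finally show ?thesis .
  qed
  then show ?thesis
    unfolding has_fps_expansion_def using *
    by (auto elim!: eventually_mono simp: Pc_eval)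
qed



definition Zf :: "complex fps" where
  "Zf = fps_const (-4) * fps_X * Pc (-2)"

lemma Zf_power: "Zf ^ i = fps_const ((-4)^i) * (fps_X ^ i * Pc (- 2 * of_nat i))"
  by (simp add: Zf_def power_mult_distrib Pc_power fps_const_power mult_ac)

lemma Zf_nth0: "fps_nth Zf 0 = 0"
  by (simp add: Zf_def)

lemma Zf_power_nth_low: "m < i \<Longrightarrow> fps_nth (Zf ^ i) m = 0"
  unfolding Zf_power by (simp add: fps_X_power_mult_nth)

lemma Zf_power_Pc_nth:
  "fps_nth (Zf ^ i * Pc (- a)) n = (if n < i then 0 else (-4)^i * (pochhammer (a + 2 * of_nat i) (n - i) / fact (n - i)))"
proof -
  have "Zf ^ i * Pc (- a) = fps_const ((-4)^i) * (fps_X ^ i * Pc (- a - 2 * of_nat i))"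
    unfolding Zf_power by (simp add: mult.assoc Pc_mult algebra_simps)
  moreover have "pochhammer (- (- a - 2 * of_nat i)) (n - i) = pochhammer (a + 2 * of_nat i) (n - i)"
    by (rule poch_cong) simp
  ultimately show ?thesis by (simp add: fps_X_power_mult_nth Pc_nth)
qed

lemma compose_mult_coeff:
  "fps_nth ((F oo Zf) * P) n = (\<Sum>i\<le>n. fps_nth F i * fps_nth (Zf ^ i * P) n)"
proof -
  have "fps_nth ((F oo Zf) * P) n = (\<Sum>m=0..n. fps_nth (F oo Zf) m * fps_nth P (n - m))"
    by (simp add: fps_mult_nth)
  also have "\<dots> = (\<Sum>m=0..n. \<Sum>i\<le>n. fps_nth F i * fps_nth (Zf ^ i) m * fps_nth P (n - m))"
  proof (rule sum.cong[OF refl])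
    fix m assume m: "m \<in> {0..n}"
    have "fps_nth (F oo Zf) m = (\<Sum>i=0..m. fps_nth F i * fps_nth (Zf ^ i) m)"
      by (rule fps_compose_nth)
    also have "\<dots> = (\<Sum>i\<le>n. fps_nth F i * fps_nth (Zf ^ i) m)"
      by (rule sum.mono_neutral_left) (use m in \<open>auto simp: Zf_power_nth_low\<close>)
    finally show "fps_nth (F oo Zf) m * fps_nth P (n - m) = (\<Sum>i\<le>n. fps_nth F i * fps_nth (Zf ^ i) m * fps_nth P (n - m))"
      by (simp add: sum_distrib_right)
  qed
  also have "\<dots> = (\<Sum>i\<le>n. \<Sum>m=0..n. fps_nth F i * fps_nth (Zf ^ i) m * fps_nth P (n - m))"
    by (rule sum.swap)
  also have "\<dots> = (\<Sum>i\<le>n. fps_nth F i * fps_nth (Zf ^ i * P) n)"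
    by (simp add: fps_mult_nth sum_distrib_left mult.assoc)
  finally show ?thesis .
qed

lemma fps_identity:
  fixes a b c :: complex
  assumes b: "b \<notin> \<int>\<^sub>\<le>\<^sub>0" and c: "c \<notin> \<int>\<^sub>\<le>\<^sub>0"
    and D: "1 + a - b \<notin> \<int>\<^sub>\<le>\<^sub>0" and E: "1 + a - c \<notin> \<int>\<^sub>\<le>\<^sub>0"
  shows "(Abs_fps (hyp_coeff [a/2, 1/2 + a/2, 1 - of_nat k + a - b - c] [1 + a - b, 1 + a - c]) oo Zf) * Pc (- a)
       = Abs_fps (\<lambda>n. hyp_coeff [a, b, c] [1 + a - b, 1 + a - c] n * Qk2 k n a b c)"
proof (rule fps_ext)
  fix n
  show "fps_nth ((Abs_fps (hyp_coeff [a/2, 1/2 + a/2, 1 - of_nat k + a - b - c] [1 + a - b, 1 + a - c]) oo Zf) * Pc (- a)) n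
      = fps_nth (Abs_fps (\<lambda>n. hyp_coeff [a, b, c] [1 + a - b, 1 + a - c] n * Qk2 k n a b c)) n"
    unfolding compose_mult_coeff Zf_power_Pc_nth
    using coeff_id[OF b c D E, of k n] by (simp add: mult.assoc)
qed



lemma ratio_lim: "((\<lambda>n::nat. (A + real n)^3 / ((real n + 1) * (real n - B)^2)) \<longlongrightarrow> 1) at_top"
  by real_asymp

lemma norm_plus_nat_le: "norm (x + of_nat n :: complex) \<le> norm x + real n"
  using norm_triangle_ineq[of x "of_nat n"] by simp

lemma norm_plus_nat_ge: "norm (x + of_nat n :: complex) \<ge> real n - norm x"
  using norm_triangle_ineq4[of "x + of_nat n" x] by simp

lemma hyp_rec:
  fixes x1 x2 x3 D E :: complex
  shows "hyp_coeff [x1, x2, x3] [D, E] (Suc n) = hyp_coeff [x1, x2, x3] [D, E] n *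
     ((x1 + of_nat n) * (x2 + of_nat n) * (x3 + of_nat n) / ((1 + of_nat n) * (D + of_nat n) * (E + of_nat n)))"
proof -
  have "hyp_coeff [x1, x2, x3] [D, E] (Suc n) =
     (pochhammer x1 n * pochhammer x2 n * pochhammer x3 n * ((x1 + of_nat n) * (x2 + of_nat n) * (x3 + of_nat n)))
     / ((fact n * (pochhammer D n * pochhammer E n)) * ((1 + of_nat n) * (D + of_nat n) * (E + of_nat n)))"
    by (simp add: hyp_coeff_def pochhammer_Suc fact_Suc mult_ac)
  also have "\<dots> = (pochhammer x1 n * pochhammer x2 n * pochhammer x3 n / (fact n * (pochhammer D n * pochhammer E n)))
     * (((x1 + of_nat n) * (x2 + of_nat n) * (x3 + of_nat n)) / ((1 + of_nat n) * (D + of_nat n) * (E + of_nat n)))"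
    by (rule times_divide_times_eq[symmetric])
  finally show ?thesis by (simp add: hyp_coeff_def mult.assoc)
qed

lemma hyp_radius:
  fixes x1 x2 x3 D E :: complex
  assumes D: "D \<notin> \<int>\<^sub>\<le>\<^sub>0" and E: "E \<notin> \<int>\<^sub>\<le>\<^sub>0"
  shows "fps_conv_radius (Abs_fps (hyp_coeff [x1, x2, x3] [D, E])) > 0"
proof -
  define h where "h = hyp_coeff [x1, x2, x3] [D, E]"
  define A where "A = norm x1 + norm x2 + norm x3"
  define B where "B = norm D + norm E"
  define R where "R = (\<lambda>n::nat. (A + real n)^3 / ((real n + 1) * (real n - B)^2))"
  have ev1: "eventually (\<lambda>n. R n < 3/2) sequentially"
    using order_tendstoD(2)[OF ratio_lim[of A B, folded R_def], of "3/2"] by simp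
  have ev2: "eventually (\<lambda>n. real n > B) sequentially"
    by real_asymp
  obtain N where N: "\<And>n. n \<ge> N \<Longrightarrow> R n < 3/2 \<and> real n > B"
    using eventually_conj[OF ev1 ev2] unfolding eventually_sequentially by blast
  have step: "norm (h (Suc n)) \<le> 3/2 * norm (h n)" if n: "n \<ge> N" for n
  proof -
    have RB: "R n < 3/2" "real n > B" using N[OF n] by auto
    have B0: "B \<ge> 0" by (simp add: B_def)
    define num where "num = (x1 + of_nat n) * (x2 + of_nat n) * (x3 + of_nat n)"
    define den where "den = (1 + of_nat n) * (D + of_nat n) * (E + of_nat n)"
    have num_le: "norm num \<le> (A + real n)^3"
    proof -
      have "norm num = norm (x1 + of_nat n) * norm (x2 + of_nat n) * norm (x3 + of_nat n)"
        by (simp add: num_def norm_mult)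
      also have "\<dots> \<le> (A + real n) * (A + real n) * (A + real n)"
      proof -
        have b1: "norm (x1 + of_nat n) \<le> A + real n"
          using norm_plus_nat_le[of x1 n] norm_ge_zero[of x2] norm_ge_zero[of x3] unfolding A_def by linarith
        have b2: "norm (x2 + of_nat n) \<le> A + real n"
          using norm_plus_nat_le[of x2 n] norm_ge_zero[of x1] norm_ge_zero[of x3] unfolding A_def by linarith
        have b3: "norm (x3 + of_nat n) \<le> A + real n"
          using norm_plus_nat_le[of x3 n] norm_ge_zero[of x2] norm_ge_zero[of x1] unfolding A_def by linarith
        have "0 \<le> A + real n" unfolding A_def by (simp add: add_nonneg_nonneg)
        then show ?thesis using b1 b2 b3 by (intro mult_mono) auto
      qed
      finally show ?thesis by (simp add: power3_eq_cube)
    qed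
    have den_ge: "norm den \<ge> (real n + 1) * (real n - B)^2"
    proof -
      have d1: "norm (D + of_nat n) \<ge> real n - B" using norm_plus_nat_ge[where x=D and n=n] norm_ge_zero[of E] unfolding B_def by linarith
      have d2: "norm (E + of_nat n) \<ge> real n - B" using norm_plus_nat_ge[where x=E and n=n] norm_ge_zero[of D] unfolding B_def by linarith
      have n1: "norm (1 + of_nat n :: complex) = real n + 1"
      proof -
        have "(1 + of_nat n :: complex) = of_nat (Suc n)" by simp
        then show ?thesis by (simp only: norm_of_nat)
      qed
      have "norm den = (real n + 1) * norm (D + of_nat n) * norm (E + of_nat n)"
        unfolding den_def norm_mult n1 ..
      also have "\<dots> \<ge> (real n + 1) * (real n - B) * (real n - B)"
        using d1 d2 RB(2) by (intro mult_mono) auto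
      finally show ?thesis by (simp add: power2_eq_square mult.assoc)
    qed
    have denpos: "(real n + 1) * (real n - B)^2 > 0" using RB(2) by simp
    have Apos: "0 \<le> A + real n" unfolding A_def by (simp add: add_nonneg_nonneg)
    have "norm (num / den) \<le> (A + real n)^3 / ((real n + 1) * (real n - B)^2)"
      unfolding norm_divide
      by (rule frac_le) (use num_le den_ge denpos Apos in auto)
    then have "norm (num / den) \<le> 3/2" using RB(1) unfolding R_def by linarith
    moreover have "h (Suc n) = h n * (num / den)"
      unfolding h_def num_def den_def by (rule hyp_rec)
    ultimately show ?thesis
    proof -
      assume q: "norm (num / den) \<le> 3/2" and hr: "h (Suc n) = h n * (num / den)"
      have "norm (h (Suc n)) = norm (h n) * norm (num / den)" unfolding hr norm_mult ..
      also have "\<dots> \<le> norm (h n) * (3/2)" by (rule mult_left_mono[OF q]) simp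
      finally show ?thesis by simp
    qed
  qed
  have "summable (\<lambda>n. h n * (1/2 :: complex)^n)"
  proof (rule summable_ratio_test[of "3/4" N])
    fix n assume "n \<ge> N"
    from step[OF this] show "norm (h (Suc n) * (1/2::complex)^Suc n) \<le> 3/4 * norm (h n * (1/2::complex)^n)"
      by (simp add: norm_mult norm_power norm_divide)
  qed simp
  then have "conv_radius h \<ge> norm (1/2 :: complex)" by (rule conv_radius_geI)
  then have "conv_radius h > 0"
    by (rule less_le_trans[rotated]) simp
  then show ?thesis unfolding fps_conv_radius_def h_def by simp
qed



lemma z_expansion: "(\<lambda>x::complex. - 4 * x / (1 - x)^2) has_fps_expansion Zf"
proof -
  have "(\<lambda>x::complex. - 4 * (x * (1 - x) powr (-2))) has_fps_expansion fps_const (-4) * (fps_X * Pc (-2))"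
    by (intro has_fps_expansion_cmult_left has_fps_expansion_mult has_fps_expansion_fps_X Pc_expansion)
  moreover have "eventually (\<lambda>x::complex. - 4 * (x * (1 - x) powr (-2)) = - 4 * x / (1 - x)^2) (nhds 0)"
  proof -
    have "eventually (\<lambda>x::complex. x \<in> ball 0 1) (nhds 0)"
      by (intro eventually_nhds_in_open) auto
    then show ?thesis
    proof (rule eventually_mono)
      fix x :: complex assume "x \<in> ball 0 1"
      then have "1 - x \<noteq> 0" by auto
      have "(1 - x) powr (-2) = inverse ((1 - x) powr 2)" by (rule powr_minus)
      also have "(1 - x) powr 2 = (1 - x)^2"
        using powr_nat'[of "1 - x" 2] \<open>1 - x \<noteq> 0\<close> by simp
      finally show "- 4 * (x * (1 - x) powr (-2)) = - 4 * x / (1 - x)^2"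
        by (simp add: divide_inverse)
    qed
  qed
  ultimately show ?thesis
    by (subst (asm) has_fps_expansion_cong) (auto simp: Zf_def mult.assoc)
qed

theorem theorem1:
  fixes k :: nat and a b c :: complex
  assumes "b \<notin> \<int>\<^sub>\<le>\<^sub>0" and "c \<notin> \<int>\<^sub>\<le>\<^sub>0"
    and "1 + a - b \<notin> \<int>\<^sub>\<le>\<^sub>0" and "1 + a - c \<notin> \<int>\<^sub>\<le>\<^sub>0"
  shows "\<exists>r>0. \<forall>x::complex. norm x < r \<longrightarrow>
    summable (\<lambda>n. hyp_coeff [a/2, 1/2 + a/2, 1 - of_nat k + a - b - c] [1 + a - b, 1 + a - c] n
                   * (- 4 * x / (1 - x)^2) ^ n)
  \<and> summable (\<lambda>n. hyp_coeff [a, b, c] [1 + a - b, 1 + a - c] n * Qk2 k n a b c * x ^ n)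
  \<and> pFq [a/2, 1/2 + a/2, 1 - of_nat k + a - b - c] [1 + a - b, 1 + a - c] (- 4 * x / (1 - x)^2)
      = (1 - x) powr a * (\<Sum>n. hyp_coeff [a, b, c] [1 + a - b, 1 + a - c] n * Qk2 k n a b c * x ^ n)"
proof -
  note b = assms(1) and c = assms(2) and D = assms(3) and E = assms(4)
  define L where "L = [a/2, 1/2 + a/2, 1 - of_nat k + a - b - c]"
  define Ls where "Ls = [1 + a - b, 1 + a - c]"
  define FL where "FL = Abs_fps (hyp_coeff L Ls)"
  define G where "G = Abs_fps (\<lambda>n. hyp_coeff [a, b, c] Ls n * Qk2 k n a b c)"
  define z where "z = (\<lambda>x::complex. - 4 * x / (1 - x)^2)"
  have radFL: "fps_conv_radius FL > 0"
    unfolding FL_def L_def Ls_def by (rule hyp_radius[OF D E])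
  have pFq_eq: "pFq L Ls = eval_fps FL"
    by (rule ext) (simp add: pFq_def eval_fps_def FL_def)
  have e1: "pFq L Ls has_fps_expansion FL"
    unfolding pFq_eq by (rule eval_fps_has_fps_expansion[OF radFL])
  have e2: "z has_fps_expansion Zf"
    unfolding z_def by (rule z_expansion)
  have e3: "(pFq L Ls \<circ> z) has_fps_expansion (FL oo Zf)"
    by (rule has_fps_expansion_compose[OF e1 e2 Zf_nth0])
  have e4: "(\<lambda>x. (pFq L Ls \<circ> z) x * (1 - x) powr (- a)) has_fps_expansion (FL oo Zf) * Pc (- a)"
    by (rule has_fps_expansion_mult[OF e3 Pc_expansion])
  have fid: "(FL oo Zf) * Pc (- a) = G"
    using fps_identity[OF b c D E, of k] unfolding FL_def G_def L_def Ls_def .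
  from e4 have radG: "fps_conv_radius G > 0"
    and ev1: "eventually (\<lambda>x. eval_fps G x = pFq L Ls (z x) * (1 - x) powr (- a)) (nhds 0)"
    unfolding fid by (auto simp: has_fps_expansion_def)
  obtain \<rho> where \<rho>: "0 < ereal \<rho>" "ereal \<rho> < fps_conv_radius FL"
    using ereal_dense2[OF radFL] by blast
  obtain \<sigma> where \<sigma>: "0 < ereal \<sigma>" "ereal \<sigma> < fps_conv_radius G"
    using ereal_dense2[OF radG] by blast
  have \<rho>0: "\<rho> > 0" using \<rho>(1) by simp
  have \<sigma>0: "\<sigma> > 0" using \<sigma>(1) by simp
  have "isCont z 0" unfolding z_def by (intro continuous_intros) auto
  then have "(z \<longlongrightarrow> z 0) (at 0)" by (simp add: isCont_def)
  then have "eventually (\<lambda>x. dist (z x) (z 0) < \<rho>) (at 0)"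
    using \<rho>0 by (simp add: tendsto_iff)
  then have "eventually (\<lambda>x. x \<noteq> 0 \<longrightarrow> dist (z x) (z 0) < \<rho>) (nhds 0)"
    by (simp add: eventually_at_filter)
  then have ev2: "eventually (\<lambda>x. norm (z x) < \<rho>) (nhds 0)"
    by (rule eventually_mono) (auto simp: z_def \<rho>0)
  have ev3: "eventually (\<lambda>x::complex. x \<in> ball 0 (min \<sigma> 1)) (nhds 0)"
    by (intro eventually_nhds_in_open) (auto simp: \<sigma>0)
  have "eventually (\<lambda>x. (eval_fps G x = pFq L Ls (z x) * (1 - x) powr (- a)) \<and> norm (z x) < \<rho>
       \<and> x \<in> ball 0 (min \<sigma> 1)) (nhds 0)"
    using eventually_conj[OF ev1 eventually_conj[OF ev2 ev3]] by simp
  then obtain r where r: "r > 0" and rP: "\<And>x. dist x 0 < r \<Longrightarrow> (eval_fps G x = pFq L Ls (z x) * (1 - x) powr (- a))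
       \<and> norm (z x) < \<rho> \<and> x \<in> ball 0 (min \<sigma> 1)"
    unfolding eventually_nhds_metric by blast
  show ?thesis
  proof (intro exI[of _ r] conjI allI impI r)
    fix x :: complex assume x: "norm x < r"
    then have P: "eval_fps G x = pFq L Ls (z x) * (1 - x) powr (- a)" "norm (z x) < \<rho>" "x \<in> ball 0 (min \<sigma> 1)"
      using rP[of x] by auto
    have zr: "ereal (norm (z x)) < fps_conv_radius FL"
    proof -
      have "ereal (norm (z x)) < ereal \<rho>" using P(2) by simp
      then show ?thesis using \<rho>(2) by (rule less_trans)
    qed
    have xr: "ereal (norm x) < fps_conv_radius G"
    proof -
      have "norm x < \<sigma>" using P(3) by simp
      then have "ereal (norm x) < ereal \<sigma>" by simp
      then show ?thesis using \<sigma>(2) by (rule less_trans)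
    qed
    have s1: "summable (\<lambda>n. fps_nth FL n * z x ^ n)" by (rule summable_fps[OF zr])
    then show "summable (\<lambda>n. hyp_coeff [a/2, 1/2 + a/2, 1 - of_nat k + a - b - c] [1 + a - b, 1 + a - c] n
                   * (- 4 * x / (1 - x)^2) ^ n)"
      by (simp add: FL_def L_def Ls_def z_def)
    have s2: "summable (\<lambda>n. fps_nth G n * x ^ n)" by (rule summable_fps[OF xr])
    then show "summable (\<lambda>n. hyp_coeff [a, b, c] [1 + a - b, 1 + a - c] n * Qk2 k n a b c * x ^ n)"
      by (simp add: G_def Ls_def)
    have x1: "1 - x \<noteq> 0" using P(3) by auto
    have pw: "(1 - x) powr a * (1 - x) powr (- a) = 1"
      using x1 by (simp add: powr_add[symmetric])
    have "(\<Sum>n. hyp_coeff [a, b, c] [1 + a - b, 1 + a - c] n * Qk2 k n a b c * x ^ n) = eval_fps G x"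
      by (simp add: eval_fps_def G_def Ls_def)
    also have "\<dots> = pFq L Ls (z x) * (1 - x) powr (- a)" by (rule P(1))
    finally have "(1 - x) powr a * (\<Sum>n. hyp_coeff [a, b, c] [1 + a - b, 1 + a - c] n * Qk2 k n a b c * x ^ n)
        = pFq L Ls (z x) * ((1 - x) powr a * (1 - x) powr (- a))" by (simp add: mult_ac)
    also have "\<dots> = pFq L Ls (z x)" by (simp add: pw)
    finally show "pFq [a/2, 1/2 + a/2, 1 - of_nat k + a - b - c] [1 + a - b, 1 + a - c] (- 4 * x / (1 - x)^2)
      = (1 - x) powr a * (\<Sum>n. hyp_coeff [a, b, c] [1 + a - b, 1 + a - c] n * Qk2 k n a b c * x ^ n)"
      by (simp add: L_def Ls_def z_def)
  qed
qed

end
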